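(* Let $\mathcal{A}$ be a safe generalized timed automaton (GTA) without renamings, and let $\rho := (q_0,v_0) \xrightarrow{\delta_0,t_0} (q_1,v_1) \xrightarrow{\delta_1,t_1} \cdots$ be a non-Zeno run of $\mathcal{A}$. Then for every future clock $x$ of $\mathcal{A}$ and every index $i \ge 0$, if $v_i(x) \neq -\infty$, there exists $j \ge i$ such that $x$ is released in $t_j$.
   Context: Clocks and valuations: $X = X_F \uplus X_H$ is a finite set of clocks partitioned into future clocks $X_F$ and history clocks $X_H$; $0$ denotes an extra constant clock. Write $\overline{\mathbb{R}} = \mathbb{R}\cup\{-\infty,+\infty\}$, with $(+\infty)+\alpha=\alpha+(+\infty)=+\infty$ for all $\alpha$, $(-\infty)+\beta=\beta+(-\infty)=-\infty$ for $\beta\neq+\infty$, $-(+\infty)=-\infty$, $-(-\infty)=+\infty$. A valuation is a map $v: X\cup\{0\}\to\overline{\mathbb{R}}$ with $v(0)=0$, $v(x)\in\mathbb{R}_{\ge0}\cup\{+\infty\}$ for $x\in X_H$ and $v(x)\in\mathbb{R}_{\le 0}\cup\{-\infty\}$ for $x\in X_F$. Constraints $\Phi(X)$ are finite conjunctions of atomic constraints $x-y\triangleleft c$ with $x,y\in X\cup\{0\}$, ${\triangleleft}\in\{<,\le\}$, $c\in\mathbb{Z}\cup\{-\infty,+\infty\}$; $v\models x-y\triangleleft c$ iff $v(x)-v(y)\triangleleft c$. For $\delta\ge 0$, $v+\delta$ adds $\delta$ to every clock of $X$. For $R\subseteq X$, $[R]v$ is the set of valuations $v'$ with $v'(x)=0$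 for $x\in R\cap X_H$ and $v'(x)=v(x)$ for $x\notin R$ (clocks in $R\cap X_F$ get arbitrary values; they are "released"). A GTA without renamings is $\mathcal{A}=(Q,\Sigma,X,\Delta,\mathcal{I},Q_f)$: $Q$ finite set of states, $\Sigma$ finite alphabet, $\mathcal{I}$ a set of pairs $(q_0,g_0)$ with $q_0\in Q$, $g_0\in\Phi(X)$, $Q_f\subseteq Q$ Büchi states, and $\Delta$ a finite set of transitions $(q,a,\mathsf{prog},q')$ where $\mathsf{prog}=\mathsf{prog}_1;\dots;\mathsf{prog}_n$ with each $\mathsf{prog}_k$ either a guard $g\in\Phi(X)$ or a change $[R]$, $R\subseteq X$. Semantics of programs: $v\xrightarrow{g}v$ iff $v\models g$; $v\xrightarrow{[R]}v'$ iff $v'\in[R]v$; sequences compose. A future clock $x$ is released in transition $t$ if the program of $t$ contains some $[R]$ with $x\in R$. Configurations are pairs $(q,v)$; delay steps $(q,v)\xrightarrow{\delta}(q,v+\delta)$ are allowed when $v+\delta$ is a valuation (all future clocks $\le 0$); discrete steps $(q,v)\xrightarrow{t}(q',v')$ when $t=(q,a,\mathsf{prog},q')\in\Delta$ and $v\xrightarrow{\mathsf{prog}}v'$. A run is a sequence $(q_0,v_0)\xrightarrow{\delta_0,t_0}(q_1,v_1)\xrightarrow{\delta_1,t_1}\cdots$ (each step a delay $\delta_i$ followed by discrete transition $t_i$) starting from an initial configuration ($(q_0,g_0)\in\mathcal{I}$, $v_0\models g_0$). It is non-Zeno if $\sum_i\delta_i$ is unbounded. Safety: let $X_D\subseteq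 X_F$ be the set of future clocks occurring in some guard $x-y\triangleleft c$ of $\mathcal{A}$ with both $x,y\in X_F$. $\mathcal{A}$ is safe if in every transition program each clock of $X_D$ is checked by a guard of the program to be $0$ or $-\infty$ before it is released, and every initial guard $g_0$ forces each history clock to be $0$ or $+\infty$. *)

theory Defs
  imports "HOL-Library.Extended_Real"
begin

datatype 'c cvar = Zero | Clk 'c

datatype bnd = Fin int | PInf | NInf

fun bnd_val :: "bnd \<Rightarrow> ereal" where
  "bnd_val (Fin k) = ereal (real_of_int k)"
| "bnd_val PInf = \<infinity>"
| "bnd_val NInf = -\<infinity>"

text \<open>Atomic constraint  x - y < c  (strict = True) or  x - y <= c  (strict = False).\<close>
datatype 'c atom = Atom "'c cvar" "'c cvar" bool bnd

type_synonym 'c guard = "'c atom list"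

datatype 'c instr = Guard "'c guard" | Change "'c set"

type_synonym 'c prog = "'c instr list"

type_synonym 'c val = "'c \<Rightarrow> ereal"

record ('s, 'a, 'c) gta =
  states :: "'s set"
  alph   :: "'a set"
  fclocks :: "'c set"
  hclocks :: "'c set"
  trans  :: "('s \<times> 'a \<times> 'c prog \<times> 's) set"
  init   :: "('s \<times> 'c guard) set"
  buchi  :: "'s set"

definition clocks :: "('s, 'a, 'c) gta \<Rightarrow> 'c set" where
  "clocks A = fclocks A \<union> hclocks A"

fun cval :: "'c val \<Rightarrow> 'c cvar \<Rightarrow> ereal" where
  "cval v Zero = 0"
| "cval v (Clk x) = v x"

text \<open>Subtraction in ereal is a + (- b), matching the conventions of the paper.\<close>
fun sat_atom :: "'c val \<Rightarrow> 'c atom \<Rightarrow> bool" where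
  "sat_atom v (Atom x y s c) =
     (if s then cval v x - cval v y < bnd_val c else cval v x - cval v y \<le> bnd_val c)"

definition sat :: "'c val \<Rightarrow> 'c guard \<Rightarrow> bool" where
  "sat v g \<longleftrightarrow> (\<forall>a\<in>set g. sat_atom v a)"

fun atom_cvars :: "'c atom \<Rightarrow> 'c cvar set" where
  "atom_cvars (Atom x y s c) = {x, y}"

definition guard_clocks :: "'c guard \<Rightarrow> 'c set" where
  "guard_clocks g = {x. \<exists>a\<in>set g. Clk x \<in> atom_cvars a}"

definition is_val :: "('s, 'a, 'c) gta \<Rightarrow> 'c val \<Rightarrow> bool" where
  "is_val A v \<longleftrightarrow> (\<forall>x\<in>hclocks A. v x \<ge> 0) \<and> (\<forall>x\<in>fclocks A. v x \<le> 0)"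

definition delay :: "('s, 'a, 'c) gta \<Rightarrow> 'c val \<Rightarrow> real \<Rightarrow> 'c val" where
  "delay A v d = (\<lambda>x. if x \<in> clocks A then v x + ereal d else v x)"

definition change :: "('s, 'a, 'c) gta \<Rightarrow> 'c set \<Rightarrow> 'c val \<Rightarrow> 'c val set" where
  "change A R v = {v'. is_val A v' \<and> (\<forall>x \<in> R \<inter> hclocks A. v' x = 0)
                        \<and> (\<forall>x. x \<notin> R \<longrightarrow> v' x = v x)}"

fun prog_sem :: "('s, 'a, 'c) gta \<Rightarrow> 'c prog \<Rightarrow> 'c val \<Rightarrow> 'c val \<Rightarrow> bool" where
  "prog_sem A [] v v' \<longleftrightarrow> v' = v"
| "prog_sem A (Guard g # p) v v' \<longleftrightarrow> sat v g \<and> prog_sem A p v v'"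
| "prog_sem A (Change R # p) v v' \<longleftrightarrow> (\<exists>w \<in> change A R v. prog_sem A p w v')"

definition instr_clocks :: "'c instr \<Rightarrow> 'c set" where
  "instr_clocks i = (case i of Guard g \<Rightarrow> guard_clocks g | Change R \<Rightarrow> R)"

definition wf_gta :: "('s, 'a, 'c) gta \<Rightarrow> bool" where
  "wf_gta A \<longleftrightarrow>
     finite (states A) \<and> finite (alph A) \<and>
     finite (fclocks A) \<and> finite (hclocks A) \<and> fclocks A \<inter> hclocks A = {} \<and>
     finite (trans A) \<and>
     (\<forall>(q, a, p, q') \<in> trans A. q \<in> states A \<and> a \<in> alph A \<and> q' \<in> states A \<and>
        (\<forall>i \<in> set p. instr_clocks i \<subseteq> clocks A)) \<and>
     (\<forall>(q, g) \<in> init A. q \<in> states A \<and> guard_clocks g \<subseteq> clocks A) \<and>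
     buchi A \<subseteq> states A"

definition prog_of :: "'s \<times> 'a \<times> 'c prog \<times> 's \<Rightarrow> 'c prog" where
  "prog_of t = fst (snd (snd t))"

definition released :: "'c \<Rightarrow> 's \<times> 'a \<times> 'c prog \<times> 's \<Rightarrow> bool" where
  "released x t \<longleftrightarrow> (\<exists>R. Change R \<in> set (prog_of t) \<and> x \<in> R)"

definition diag_clocks :: "('s, 'a, 'c) gta \<Rightarrow> 'c set" where
  "diag_clocks A = {z \<in> fclocks A. \<exists>t \<in> trans A. \<exists>g. Guard g \<in> set (prog_of t) \<and>
      (\<exists>x y s c. Atom (Clk x) (Clk y) s c \<in> set g \<and> x \<in> fclocks A \<and> y \<in> fclocks A
                 \<and> (z = x \<or> z = y))}"

definition safe :: "('s, 'a, 'c) gta \<Rightarrow> bool" where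
  "safe A \<longleftrightarrow>
     (\<forall>t \<in> trans A. \<forall>p1 R p2 x. prog_of t = p1 @ Change R # p2 \<and> x \<in> R \<and> x \<in> diag_clocks A \<longrightarrow>
        (\<exists>g. Guard g \<in> set p1 \<and>
             (\<forall>v. is_val A v \<and> sat v g \<longrightarrow> v x = 0 \<or> v x = -\<infinity>))) \<and>
     (\<forall>(q, g) \<in> init A. \<forall>x \<in> hclocks A.
        \<forall>v. is_val A v \<and> sat v g \<longrightarrow> v x = 0 \<or> v x = \<infinity>)"

definition is_run :: "('s, 'a, 'c) gta \<Rightarrow> (nat \<Rightarrow> 's) \<Rightarrow> (nat \<Rightarrow> 'c val) \<Rightarrow> (nat \<Rightarrow> real)
     \<Rightarrow> (nat \<Rightarrow> 's \<times> 'a \<times> 'c prog \<times> 's) \<Rightarrow> bool" where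
  "is_run A q v d t \<longleftrightarrow>
     (\<exists>g0. (q 0, g0) \<in> init A \<and> sat (v 0) g0) \<and> is_val A (v 0) \<and>
     (\<forall>i. d i \<ge> 0 \<and> is_val A (delay A (v i) (d i)) \<and> t i \<in> trans A \<and>
          (\<exists>a p. t i = (q i, a, p, q (Suc i)) \<and> prog_sem A p (delay A (v i) (d i)) (v (Suc i))))"

definition non_zeno :: "(nat \<Rightarrow> real) \<Rightarrow> bool" where
  "non_zeno d \<longleftrightarrow> (\<forall>B. \<exists>n. (\<Sum>i<n. d i) > B)"

end

theory Submission
  imports Defs
begin

lemma prog_sem_keep:
  assumes "prog_sem A p w w'" and "\<forall>R. Change R \<in> set p \<longrightarrow> x \<notin> R"
  shows "w' x = w x"
  using assms
proof (induction p arbitrary: w)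
  case Nil then show ?case by simp
next
  case (Cons a p)
  show ?case
  proof (cases a)
    case (Guard g) then show ?thesis using Cons by simp
  next
    case (Change R)
    then obtain u where u: "u \<in> change A R w" "prog_sem A p u w'" using Cons.prems by auto
    have "x \<notin> R" using Cons.prems Change by auto
    then have "u x = w x" using u(1) by (simp add: change_def)
    moreover have "w' x = u x" using Cons.IH[OF u(2)] Cons.prems by auto
    ultimately show ?thesis by simp
  qed
qed

theorem lemma6:
  fixes A :: "('s, 'a, 'c) gta"
  assumes "wf_gta A" and "safe A"
    and "is_run A q v d t" and "non_zeno d"
    and "x \<in> fclocks A" and "v i x \<noteq> -\<infinity>"
  shows "\<exists>j\<ge>i. released x (t j)"
proof (rule ccontr)
  assume nr: "\<not> (\<exists>j\<ge>i. released x (t j))"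
  have xc: "x \<in> clocks A" using assms(5) by (simp add: clocks_def)
  have run: "\<And>j. d j \<ge> 0 \<and> is_val A (delay A (v j) (d j)) \<and>
     (\<exists>a p. t j = (q j, a, p, q (Suc j)) \<and> prog_sem A p (delay A (v j) (d j)) (v (Suc j)))"
    using assms(3) unfolding is_run_def by blast
  have dle: "\<And>j. v j x + ereal (d j) \<le> 0"
  proof -
    fix j
    have "is_val A (delay A (v j) (d j))" using run by blast
    then show "v j x + ereal (d j) \<le> 0" using assms(5) xc
      unfolding is_val_def delay_def by auto
  qed
  have step: "\<And>j. j \<ge> i \<Longrightarrow> v (Suc j) x = v j x + ereal (d j)"
  proof -
    fix j assume "j \<ge> i"
    then have nrj: "\<not> released x (t j)" using nr by blast
    obtain a p where tp: "t j = (q j, a, p, q (Suc j))"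
      and ps: "prog_sem A p (delay A (v j) (d j)) (v (Suc j))" using run by blast
    have "\<forall>R. Change R \<in> set p \<longrightarrow> x \<notin> R"
      using nrj tp by (auto simp: released_def prog_of_def)
    then have "v (Suc j) x = delay A (v j) (d j) x" using prog_sem_keep[OF ps] by blast
    then show "v (Suc j) x = v j x + ereal (d j)" using xc by (simp add: delay_def)
  qed
  have fin: "\<bar>v i x\<bar> \<noteq> \<infinity>"
  proof -
    have "v i x \<noteq> \<infinity>" using dle[of i] by auto
    then show ?thesis using assms(6) by auto
  qed
  define r where "r = real_of_ereal (v i x)"
  have vi: "v i x = ereal r" using fin r_def by auto
  have form: "\<And>k. v (i+k) x = ereal (r + (\<Sum>j\<in>{i..<i+k}. d j))"
  proof -
    fix k show "v (i+k) x = ereal (r + (\<Sum>j\<in>{i..<i+k}. d j))"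
    proof (induction k)
      case 0 then show ?case using vi by simp
    next
      case (Suc k)
      have "v (i + Suc k) x = v (i+k) x + ereal (d (i+k))" using step[of "i+k"] by simp
      also have "\<dots> = ereal (r + (\<Sum>j\<in>{i..<i+Suc k}. d j))" using Suc by simp
      finally show ?case .
    qed
  qed
  have bnd: "\<And>k. (\<Sum>j\<in>{i..<i+Suc k}. d j) \<le> - r"
  proof -
    fix k
    have "v (i+k) x + ereal (d (i+k)) \<le> 0" using dle by blast
    then have "r + (\<Sum>j\<in>{i..<i+k}. d j) + d (i+k) \<le> 0" using form[of k] by simp
    then show "(\<Sum>j\<in>{i..<i+Suc k}. d j) \<le> - r" by simp
  qed
  have r0: "r \<le> 0" using bnd[of 0] run[of i] by simp
  have all: "\<And>n. (\<Sum>j<n. d j) \<le> (\<Sum>j<i. d j) - r"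
  proof -
    fix n
    show "(\<Sum>j<n. d j) \<le> (\<Sum>j<i. d j) - r"
    proof (cases "n \<le> i")
      case True
      have "(\<Sum>j<n. d j) \<le> (\<Sum>j<i. d j)"
        by (rule sum_mono2) (use True run in auto)
      then show ?thesis using r0 by simp
    next
      case False
      then obtain k where n: "n = i + Suc k" by (metis add_Suc_right le_add_diff_inverse less_natE not_le)
      have "(\<Sum>j<n. d j) = (\<Sum>j<i. d j) + (\<Sum>j\<in>{i..<i+Suc k}. d j)"
        unfolding n by (metis le_add1 lessThan_atLeast0 sum.atLeastLessThan_concat zero_le)
      then show ?thesis using bnd[of k] by simp
    qed
  qed
  obtain n where "(\<Sum>j<n. d j) > (\<Sum>j<i. d j) - r" using assms(4) unfolding non_zeno_def by blast
  then show False using all[of n] by simp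
qed

end
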